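(* Let $G$ be a countable discrete group and $\sigma: G\curvearrowright(X,\nu)$ a p.m.p. action on a standard probability space. For every natural number $n$ the map $\Psi_n: H^n(G,\mathbb{T})\to H^n(G\curvearrowright X;\mathbb{T})$, $\Psi_n([c])=[c']$ with $c'(g_1,\dots,g_n,x)=c(g_1,\dots,g_n)$, is a well-defined group homomorphism. Moreover: (i) if $\sigma$ is weakly mixing then $\Psi_1$ is injective; (ii) if the diagonal action $\sigma^2:G\curvearrowright(X^2,\nu^2)$ is weakly mixing and $\mathbb{T}$-cocycle superrigid, then $\Psi_2$ is injective.
   Context: $\mathbb{T}$ is the unit circle with trivial $G$-action; $H^n(G,\mathbb{T})$ is group cohomology via inhomogeneous cochains. For a p.m.p. action, a measurable $c:G^n\times X\to\mathbb{T}$ is an $n$-cocycle if for all $g_1,\dots,g_{n+1}$ and a.e. $x$: $c(g_2,\dots,g_{n+1},g_1^{-1}x)\prod_{i=1}^n c(g_1,\dots,g_ig_{i+1},\dots,g_{n+1},x)^{(-1)^i}\cdot c(g_1,\dots,g_n,x)^{(-1)^{n+1}}=1$; $c_1,c_2$ are cohomologous if for some measurable $b:G^{n-1}\times X\to\mathbb{T}$, for all $g_i$ and a.e. $x$, $c_1(g_1,\dots,g_n,x)\,b(g_2,\dots,g_n,g_1^{-1}x)\prod_{i=1}^{n-1}b(g_1,\dots,g_ig_{i+1},\dots,g_n,x)^{(-1)^i}\cdot b(g_1,\dots,g_{n-1},x)^{(-1)^n}=c_2(g_1,\dots,g_n,x)$; $H^n(G\curvearrowright X;\mathbb{T})$ is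 cocycles modulo those cohomologous to $1$. Weakly mixing: the diagonal action on the product of two copies is ergodic. A free ergodic p.m.p. action $G\curvearrowright(Y,\eta)$ is $\mathbb{T}$-cocycle superrigid if every measurable $c:G\times Y\to\mathbb{T}$ with $c(gh,y)=c(g,y)c(h,g^{-1}y)$ a.e. is of the form $c(g,y)=\lambda(g)b(y)b(g^{-1}y)^{-1}$ a.e. for some homomorphism $\lambda:G\to\mathbb{T}$ and measurable $b:Y\to\mathbb{T}$. *)

theory Defs
  imports "HOL-Probability.Probability" "HOL-Algebra.Group" "HOL-Algebra.Coset"
begin

definition gtuples :: "('g,'b) monoid_scheme \<Rightarrow> nat \<Rightarrow> 'g list set" where
  "gtuples G n = {gs. length gs = n \<and> set gs \<subseteq> carrier G}"

text \<open>For gs = (g_1,...,g_{m}) and 1 \<le> i < m: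
  (g_1,...,g_i g_{i+1},...,g_m).\<close>
definition merge_at :: "('g,'b) monoid_scheme \<Rightarrow> nat \<Rightarrow> 'g list \<Rightarrow> 'g list" where
  "merge_at G i gs = take (i - 1) gs @ ((gs ! (i - 1)) \<otimes>\<^bsub>G\<^esub> (gs ! i)) # drop (i + 1) gs"

definition dG :: "('g,'b) monoid_scheme \<Rightarrow> ('g list \<Rightarrow> complex) \<Rightarrow> 'g list \<Rightarrow> complex" where
  "dG G f gs = (let n = length gs - 1 in
     f (tl gs) * (\<Prod>i=1..n. f (merge_at G i gs) powi ((-1)^i))
       * f (butlast gs) powi ((-1)^(n+1)))"

definition Zg :: "('g,'b) monoid_scheme \<Rightarrow> nat \<Rightarrow> ('g list \<Rightarrow> complex) set" where
  "Zg G n = {c. (\<forall>gs\<in>gtuples G n. cmod (c gs) = 1) \<and>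
                (\<forall>gs\<in>gtuples G (Suc n). dG G c gs = 1)}"

text \<open>Coboundaries; in degree 0 the group of coboundaries is trivial (convention).\<close>
definition Bg :: "('g,'b) monoid_scheme \<Rightarrow> nat \<Rightarrow> ('g list \<Rightarrow> complex) set" where
  "Bg G n = {c \<in> Zg G n.
     (if n = 0 then (\<forall>gs\<in>gtuples G 0. c gs = 1)
      else (\<exists>b. (\<forall>gs\<in>gtuples G (n - 1). cmod (b gs) = 1) \<and>
                (\<forall>gs\<in>gtuples G n. c gs = dG G b gs)))}"

definition Zgrp :: "('g,'b) monoid_scheme \<Rightarrow> nat \<Rightarrow> ('g list \<Rightarrow> complex) monoid" where
  "Zgrp G n = \<lparr>carrier = Zg G n, mult = (\<lambda>f h gs. f gs * h gs), one = (\<lambda>_. 1)\<rparr>"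

definition Hgrp :: "('g,'b) monoid_scheme \<Rightarrow> nat \<Rightarrow> ('g list \<Rightarrow> complex) set monoid" where
  "Hgrp G n = Zgrp G n Mod Bg G n"

definition Hclass :: "('g,'b) monoid_scheme \<Rightarrow> nat \<Rightarrow> ('g list \<Rightarrow> complex) \<Rightarrow> ('g list \<Rightarrow> complex) set" where
  "Hclass G n c = Bg G n #>\<^bsub>Zgrp G n\<^esub> c"

definition pmp_action :: "('g,'b) monoid_scheme \<Rightarrow> 'x measure \<Rightarrow> ('g \<Rightarrow> 'x \<Rightarrow> 'x) \<Rightarrow> bool" where
  "pmp_action G M \<sigma> \<longleftrightarrow> prob_space M \<and>
     (\<forall>g\<in>carrier G. \<sigma> g \<in> M \<rightarrow>\<^sub>M M \<and> distr M M (\<sigma> g) = M) \<and>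
     (\<forall>x\<in>space M. \<sigma> \<one>\<^bsub>G\<^esub> x = x) \<and>
     (\<forall>g\<in>carrier G. \<forall>h\<in>carrier G. \<forall>x\<in>space M. \<sigma> (g \<otimes>\<^bsub>G\<^esub> h) x = \<sigma> g (\<sigma> h x))"

definition ergodic_action :: "('g,'b) monoid_scheme \<Rightarrow> 'x measure \<Rightarrow> ('g \<Rightarrow> 'x \<Rightarrow> 'x) \<Rightarrow> bool" where
  "ergodic_action G M \<sigma> \<longleftrightarrow>
     (\<forall>A\<in>sets M. (\<forall>g\<in>carrier G. \<sigma> g -` A \<inter> space M = A) \<longrightarrow>
        measure M A = 0 \<or> measure M A = 1)"

definition diag_action :: "('g \<Rightarrow> 'x \<Rightarrow> 'x) \<Rightarrow> 'g \<Rightarrow> 'x \<times> 'x \<Rightarrow> 'x \<times> 'x" where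
  "diag_action \<sigma> g = (\<lambda>(x, y). (\<sigma> g x, \<sigma> g y))"

definition weakly_mixing :: "('g,'b) monoid_scheme \<Rightarrow> 'x measure \<Rightarrow> ('g \<Rightarrow> 'x \<Rightarrow> 'x) \<Rightarrow> bool" where
  "weakly_mixing G M \<sigma> \<longleftrightarrow> ergodic_action G (M \<Otimes>\<^sub>M M) (diag_action \<sigma>)"

definition free_action :: "('g,'b) monoid_scheme \<Rightarrow> 'x measure \<Rightarrow> ('g \<Rightarrow> 'x \<Rightarrow> 'x) \<Rightarrow> bool" where
  "free_action G M \<sigma> \<longleftrightarrow> (\<forall>g\<in>carrier G - {\<one>\<^bsub>G\<^esub>}. AE x in M. \<sigma> g x \<noteq> x)"

definition T_cocycle_superrigid :: "('g,'b) monoid_scheme \<Rightarrow> 'x measure \<Rightarrow> ('g \<Rightarrow> 'x \<Rightarrow> 'x) \<Rightarrow> bool" where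
  "T_cocycle_superrigid G M \<sigma> \<longleftrightarrow>
     free_action G M \<sigma> \<and> ergodic_action G M \<sigma> \<and> pmp_action G M \<sigma> \<and>
     (\<forall>c :: 'g \<Rightarrow> 'x \<Rightarrow> complex.
        (\<forall>g\<in>carrier G. c g \<in> borel_measurable M \<and> (\<forall>y\<in>space M. cmod (c g y) = 1)) \<and>
        (\<forall>g\<in>carrier G. \<forall>h\<in>carrier G. AE y in M.
            c (g \<otimes>\<^bsub>G\<^esub> h) y = c g y * c h (\<sigma> (inv\<^bsub>G\<^esub> g) y))
        \<longrightarrow> (\<exists>(hom_chr::'g \<Rightarrow> complex) (b::'x \<Rightarrow> complex).
              (\<forall>g\<in>carrier G. cmod (hom_chr g) = 1) \<and>
              (\<forall>g\<in>carrier G. \<forall>h\<in>carrier G. hom_chr (g \<otimes>\<^bsub>G\<^esub> h) = hom_chr g * hom_chr h) \<and>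
              b \<in> borel_measurable M \<and> (\<forall>y\<in>space M. cmod (b y) = 1) \<and>
              (\<forall>g\<in>carrier G. AE y in M. c g y = hom_chr g * b y / b (\<sigma> (inv\<^bsub>G\<^esub> g) y))))"

text \<open>Coboundary operator on measurable cochains; (g_1^{-1} x) is sigma (inv g_1) x.\<close>
definition dA :: "('g,'b) monoid_scheme \<Rightarrow> ('g \<Rightarrow> 'x \<Rightarrow> 'x) \<Rightarrow> ('g list \<Rightarrow> 'x \<Rightarrow> complex)
                 \<Rightarrow> 'g list \<Rightarrow> 'x \<Rightarrow> complex" where
  "dA G \<sigma> c gs x = (let n = length gs - 1 in
     c (tl gs) (\<sigma> (inv\<^bsub>G\<^esub> (hd gs)) x) * (\<Prod>i=1..n. c (merge_at G i gs) x powi ((-1)^i))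
       * c (butlast gs) x powi ((-1)^(n+1)))"

text \<open>Measurable T-valued n-cochains (G countable discrete: measurability on G^n x X
  amounts to measurability of each section).\<close>
definition meas_cochain :: "('g,'b) monoid_scheme \<Rightarrow> 'x measure \<Rightarrow> nat \<Rightarrow> ('g list \<Rightarrow> 'x \<Rightarrow> complex) \<Rightarrow> bool" where
  "meas_cochain G M n c \<longleftrightarrow>
     (\<forall>gs\<in>gtuples G n. c gs \<in> borel_measurable M \<and> (\<forall>x\<in>space M. cmod (c gs x) = 1))"

definition Za :: "('g,'b) monoid_scheme \<Rightarrow> 'x measure \<Rightarrow> ('g \<Rightarrow> 'x \<Rightarrow> 'x) \<Rightarrow> nat
                   \<Rightarrow> ('g list \<Rightarrow> 'x \<Rightarrow> complex) set" where
  "Za G M \<sigma> n = {c. meas_cochain G M n c \<and>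
      (\<forall>gs\<in>gtuples G (Suc n). AE x in M. dA G \<sigma> c gs x = 1)}"

text \<open>In degree 0 (no (-1)-cochains) "cohomologous" means equal a.e. (convention).\<close>
definition cohomologous :: "('g,'b) monoid_scheme \<Rightarrow> 'x measure \<Rightarrow> ('g \<Rightarrow> 'x \<Rightarrow> 'x) \<Rightarrow> nat
     \<Rightarrow> ('g list \<Rightarrow> 'x \<Rightarrow> complex) \<Rightarrow> ('g list \<Rightarrow> 'x \<Rightarrow> complex) \<Rightarrow> bool" where
  "cohomologous G M \<sigma> n c1 c2 \<longleftrightarrow>
     (if n = 0 then (\<forall>gs\<in>gtuples G 0. AE x in M. c1 gs x = c2 gs x)
      else (\<exists>b. meas_cochain G M (n - 1) b \<and>
              (\<forall>gs\<in>gtuples G n. AE x in M. c1 gs x * dA G \<sigma> b gs x = c2 gs x)))"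

definition Ba :: "('g,'b) monoid_scheme \<Rightarrow> 'x measure \<Rightarrow> ('g \<Rightarrow> 'x \<Rightarrow> 'x) \<Rightarrow> nat
                   \<Rightarrow> ('g list \<Rightarrow> 'x \<Rightarrow> complex) set" where
  "Ba G M \<sigma> n = {c \<in> Za G M \<sigma> n. cohomologous G M \<sigma> n c (\<lambda>_ _. 1)}"

definition Zagrp :: "('g,'b) monoid_scheme \<Rightarrow> 'x measure \<Rightarrow> ('g \<Rightarrow> 'x \<Rightarrow> 'x) \<Rightarrow> nat
                   \<Rightarrow> ('g list \<Rightarrow> 'x \<Rightarrow> complex) monoid" where
  "Zagrp G M \<sigma> n = \<lparr>carrier = Za G M \<sigma> n, mult = (\<lambda>f h gs x. f gs x * h gs x),
                     one = (\<lambda>_ _. 1)\<rparr>"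

definition Hact :: "('g,'b) monoid_scheme \<Rightarrow> 'x measure \<Rightarrow> ('g \<Rightarrow> 'x \<Rightarrow> 'x) \<Rightarrow> nat
                   \<Rightarrow> ('g list \<Rightarrow> 'x \<Rightarrow> complex) set monoid" where
  "Hact G M \<sigma> n = Zagrp G M \<sigma> n Mod Ba G M \<sigma> n"

definition Haclass :: "('g,'b) monoid_scheme \<Rightarrow> 'x measure \<Rightarrow> ('g \<Rightarrow> 'x \<Rightarrow> 'x) \<Rightarrow> nat
                   \<Rightarrow> ('g list \<Rightarrow> 'x \<Rightarrow> complex) \<Rightarrow> ('g list \<Rightarrow> 'x \<Rightarrow> complex) set" where
  "Haclass G M \<sigma> n c = Ba G M \<sigma> n #>\<^bsub>Zagrp G M \<sigma> n\<^esub> c"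

end

theory Submission
  imports Defs
begin


lemma AE_fst_lift:
  assumes "sigma_finite_measure M1" "sigma_finite_measure M2" "AE x in M1. P x"
  shows "AE p in M1 \<Otimes>\<^sub>M M2. P (fst p)"
proof -
  interpret pair_sigma_finite M1 M2 using assms by (simp add: pair_sigma_finite_def)
  from assms(3) obtain N where N: "{x\<in>space M1. \<not>P x} \<subseteq> N" "emeasure M1 N = 0" "N\<in>sets M1"
    by (rule AE_E)
  note [measurable] = N(3)
  have "AE x in M1. x \<notin> N" using N by (intro AE_not_in) (auto simp: null_sets_def)
  hence "AE x in M1. AE y in M2. fst (x,y) \<notin> N" by eventually_elim simp
  hence "AE p in M1\<Otimes>\<^sub>M M2. fst p \<notin> N" by (intro AE_pair_measure) measurable
  then show ?thesis using AE_space[of "M1 \<Otimes>\<^sub>M M2"]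
    by eventually_elim (use N in \<open>auto simp: space_pair_measure\<close>)
qed

lemma AE_snd_lift:
  assumes "sigma_finite_measure M1" "sigma_finite_measure M2" "AE x in M2. P x"
  shows "AE p in M1 \<Otimes>\<^sub>M M2. P (snd p)"
proof -
  interpret pair_sigma_finite M1 M2 using assms by (simp add: pair_sigma_finite_def)
  from assms(3) obtain N where N: "{x\<in>space M2. \<not>P x} \<subseteq> N" "emeasure M2 N = 0" "N\<in>sets M2"
    by (rule AE_E)
  note [measurable] = N(3)
  have nN: "AE x in M2. x \<notin> N" using N by (intro AE_not_in) (auto simp: null_sets_def)
  have "AE x in M1. AE y in M2. snd (x,y) \<notin> N" by (rule AE_I2) (simp add: nN)
  hence "AE p in M1\<Otimes>\<^sub>M M2. snd p \<notin> N" by (intro AE_pair_measure) measurable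
  then show ?thesis using AE_space[of "M1 \<Otimes>\<^sub>M M2"]
    by eventually_elim (use N in \<open>auto simp: space_pair_measure\<close>)
qed

lemma AE_pmp:
  assumes f: "f \<in> M \<rightarrow>\<^sub>M M" and d: "distr M M f = M" and ae: "AE x in M. P x"
  shows "AE x in M. P (f x)"
proof -
  from ae obtain N where N: "{x\<in>space M. \<not>P x} \<subseteq> N" "emeasure M N = 0" "N\<in>sets M"
    by (rule AE_E)
  note [measurable] = N(3) f
  have "AE x in M. x \<notin> N" using N by (intro AE_not_in) (auto simp: null_sets_def)
  hence "AE x in distr M M f. x \<notin> N" by (simp only: d)
  hence "AE x in M. f x \<notin> N" by (subst (asm) AE_distr_iff) measurable
  then show ?thesis using AE_space[of M]
    by eventually_elim (use N measurable_space[OF f] in auto)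
qed

lemma AE_ex_point:
  assumes "prob_space M" "AE x in M. P x" shows "\<exists>x\<in>space M. P x"
proof (rule ccontr)
  assume nt: "\<not> (\<exists>x\<in>space M. P x)"
  from assms(2) have "AE x in M. False" by (rule AE_mp) (use nt in \<open>auto intro!: AE_I2\<close>)
  thus False using prob_space.AE_False[OF assms(1)] by simp
qed




lemma zero_one_const:
  fixes F :: "'y \<Rightarrow> complex"
  assumes P: "prob_space N" and Fm[measurable]: "F \<in> borel_measurable N"
    and zo: "\<And>A. A \<in> sets borel \<Longrightarrow> measure N {p\<in>space N. F p \<in> A} = 0 \<or> measure N {p\<in>space N. F p \<in> A} = 1"
  shows "\<exists>\<kappa>. AE p in N. F p = \<kappa>"
proof -
  interpret prob_space N by fact
  obtain B :: "complex set set" where Bc: "countable B" and Bo: "\<And>C. C \<in> B \<Longrightarrow> open C"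
    and Bb: "\<And>S. open S \<Longrightarrow> \<exists>U. U \<subseteq> B \<and> S = \<Union>U"
    by (rule univ_second_countable) blast
  define pr where "pr A = measure N {p\<in>space N. F p \<in> A}" for A
  have sA: "{p\<in>space N. F p \<in> A} \<in> sets N" if "A \<in> sets borel" for A
    using that by measurable
  define Z where "Z = {b\<in>B. pr b = 0}"
  have "AE p in N. \<forall>b\<in>Z. F p \<notin> b"
  proof (subst AE_ball_countable)
    show "countable Z" using Bc by (auto simp: Z_def intro: countable_subset)
    show "\<forall>b\<in>Z. AE p in N. F p \<notin> b"
    proof
      fix b assume b: "b \<in> Z"
      hence bs: "b \<in> sets borel" using Bo by (auto simp: Z_def)
      have "{p\<in>space N. \<not> F p \<notin> b} = {p\<in>space N. F p \<in> b}" by auto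
      moreover have "emeasure N {p\<in>space N. F p \<in> b} = 0"
        using b sA[OF bs] by (simp add: Z_def pr_def emeasure_eq_measure)
      ultimately show "AE p in N. F p \<notin> b"
        by (subst AE_iff_measurable[OF sA[OF bs]]) auto
    qed
  qed
  then obtain p0 where p0: "p0 \<in> space N" "\<forall>b\<in>Z. F p0 \<notin> b"
    using AE_ex_point[OF P] by blast
  define \<kappa> where "\<kappa> = F p0"
  have one: "pr b = 1" if "b \<in> B" "z \<in> b" "\<forall>b\<in>Z. z \<notin> b" for b z
    using that zo[of b] Bo[of b] by (auto simp: Z_def pr_def)
  have eq: "z = \<kappa>" if z: "\<forall>b\<in>Z. z \<notin> b" for z
  proof (rule ccontr)
    assume "z \<noteq> \<kappa>"
    then obtain O1 O2 where O: "open O1" "open O2" "\<kappa> \<in> O1" "z \<in> O2" "O1 \<inter> O2 = {}"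
      using separation_t2 by metis
    obtain U1 where U1: "U1 \<subseteq> B" "O1 = \<Union>U1" using Bb[OF O(1)] by blast
    obtain U2 where U2: "U2 \<subseteq> B" "O2 = \<Union>U2" using Bb[OF O(2)] by blast
    obtain b1 where b1: "b1 \<in> U1" "\<kappa> \<in> b1" using U1 O by blast
    obtain b2 where b2: "b2 \<in> U2" "z \<in> b2" using U2 O by blast
    have p1: "pr b1 = 1" using one[of b1 \<kappa>] b1 U1 p0 by (auto simp: \<kappa>_def)
    have p2: "pr b2 = 1" using one[of b2 z] b2 U2 z by auto
    have d: "b1 \<inter> b2 = {}" using b1 b2 U1 U2 O by blast
    have s1: "b1 \<in> sets borel" "b2 \<in> sets borel" using b1 b2 U1 U2 Bo by auto
    have "pr (b1 \<union> b2) = pr b1 + pr b2"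
      unfolding pr_def
      using d sA[OF s1(1)] sA[OF s1(2)]
      by (subst finite_measure_Union[symmetric]) (auto intro!: arg_cong[where f="measure N"])
    moreover have "pr (b1 \<union> b2) \<le> 1" unfolding pr_def by (rule prob_le_1)
    ultimately show False using p1 p2 by simp
  qed
  show ?thesis
    using \<open>AE p in N. \<forall>b\<in>Z. F p \<notin> b\<close> by (intro exI[of _ \<kappa>]) (erule AE_mp, intro AE_I2, simp add: eq)
qed




lemma ergodic_invariant_const:
  fixes \<tau> :: "'g \<Rightarrow> 'y \<Rightarrow> 'y" and F :: "'y \<Rightarrow> complex"
  assumes G: "group G" and cG: "countable (carrier G)" and P: "prob_space N"
    and meas: "\<And>g. g \<in> carrier G \<Longrightarrow> \<tau> g \<in> N \<rightarrow>\<^sub>M N"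
    and comp: "\<And>g h p. g \<in> carrier G \<Longrightarrow> h \<in> carrier G \<Longrightarrow> p \<in> space N \<Longrightarrow> \<tau> (g \<otimes>\<^bsub>G\<^esub> h) p = \<tau> g (\<tau> h p)"
    and erg: "ergodic_action G N \<tau>"
    and Fm[measurable]: "F \<in> borel_measurable N"
    and invF: "\<And>g. g \<in> carrier G \<Longrightarrow> AE p in N. F (\<tau> g p) = F p"
  shows "\<exists>\<kappa>. AE p in N. F p = \<kappa>"
proof (rule zero_one_const[OF P Fm])
  interpret group G by fact
  fix A :: "complex set" assume A[measurable]: "A \<in> sets borel"
  define E where "E = {p\<in>space N. F p \<in> A}"
  define E' where "E' = {p\<in>space N. \<forall>g\<in>carrier G. F (\<tau> g p) \<in> A}"
  have Es: "E \<in> sets N" unfolding E_def by measurable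
  have E's: "E' \<in> sets N" unfolding E'_def
  proof (rule sets.sets_Collect_countable_All'[OF _ cG])
    fix g assume g: "g \<in> carrier G"
    note meas[OF g, measurable]
    show "{p\<in>space N. F (\<tau> g p) \<in> A} \<in> sets N" by measurable
  qed
  have invE': "\<tau> h -` E' \<inter> space N = E'" if h: "h \<in> carrier G" for h
  proof (intro equalityI subsetI)
    fix p assume "p \<in> \<tau> h -` E' \<inter> space N"
    hence p: "p \<in> space N" "\<forall>g\<in>carrier G. F (\<tau> g (\<tau> h p)) \<in> A" by (auto simp: E'_def)
    show "p \<in> E'" unfolding E'_def
    proof (safe intro!: p(1))
      fix g assume g: "g \<in> carrier G"
      have "F (\<tau> (g \<otimes>\<^bsub>G\<^esub> inv\<^bsub>G\<^esub> h) (\<tau> h p)) \<in> A" using p g h by auto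
      also have "\<tau> (g \<otimes>\<^bsub>G\<^esub> inv\<^bsub>G\<^esub> h) (\<tau> h p) = \<tau> (g \<otimes>\<^bsub>G\<^esub> inv\<^bsub>G\<^esub> h \<otimes>\<^bsub>G\<^esub> h) p"
        using comp[of "g \<otimes>\<^bsub>G\<^esub> inv\<^bsub>G\<^esub> h" h p] g h p by auto
      also have "g \<otimes>\<^bsub>G\<^esub> inv\<^bsub>G\<^esub> h \<otimes>\<^bsub>G\<^esub> h = g" using g h by (simp add: m_assoc)
      finally show "F (\<tau> g p) \<in> A" .
    qed
  next
    fix p assume "p \<in> E'"
    hence p: "p \<in> space N" "\<forall>g\<in>carrier G. F (\<tau> g p) \<in> A" by (auto simp: E'_def)
    have sp: "\<tau> h p \<in> space N" using measurable_space[OF meas[OF h]] p by auto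
    have "F (\<tau> g (\<tau> h p)) \<in> A" if g: "g \<in> carrier G" for g
      using p(2)[rule_format, of "g \<otimes>\<^bsub>G\<^esub> h"] comp[of g h p] g h p by auto
    thus "p \<in> \<tau> h -` E' \<inter> space N" using sp p by (auto simp: E'_def)
  qed
  have "AE p in N. \<forall>g\<in>carrier G. F (\<tau> g p) = F p"
    using cG invF by (subst AE_ball_countable) auto
  hence "AE p in N. p \<in> E \<longleftrightarrow> p \<in> E'"
  proof (rule AE_mp, intro AE_I2 impI)
    fix p assume "p \<in> space N" "\<forall>g\<in>carrier G. F (\<tau> g p) = F p"
    thus "p \<in> E \<longleftrightarrow> p \<in> E'" by (auto simp: E_def E'_def)
  qed
  hence "measure N E = measure N E'" by (rule measure_eq_AE[OF _ Es E's])
  moreover have "measure N E' = 0 \<or> measure N E' = 1"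
    using erg E's invE' unfolding ergodic_action_def by blast
  ultimately show "measure N {p\<in>space N. F p \<in> A} = 0 \<or> measure N {p\<in>space N. F p \<in> A} = 1"
    by (simp add: E_def)
qed




locale cmul =
  fixes R :: "('a,'m) monoid_scheme" and S :: "'a set"
  assumes comm: "\<And>a b. a \<otimes>\<^bsub>R\<^esub> b = b \<otimes>\<^bsub>R\<^esub> a"
    and assoc: "\<And>a b c. (a \<otimes>\<^bsub>R\<^esub> b) \<otimes>\<^bsub>R\<^esub> c = a \<otimes>\<^bsub>R\<^esub> (b \<otimes>\<^bsub>R\<^esub> c)"
    and unit: "\<And>a. \<one>\<^bsub>R\<^esub> \<otimes>\<^bsub>R\<^esub> a = a"
    and S1: "\<one>\<^bsub>R\<^esub> \<in> S" and Smul: "\<And>a b. a \<in> S \<Longrightarrow> b \<in> S \<Longrightarrow> a \<otimes>\<^bsub>R\<^esub> b \<in> S"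
begin

lemma coset_mem: "c \<in> S #>\<^bsub>R\<^esub> c"
  unfolding r_coset_def by (rule UN_I[OF S1]) (simp add: unit)

lemma coset_sub: assumes "c \<in> S #>\<^bsub>R\<^esub> d" shows "S #>\<^bsub>R\<^esub> c \<subseteq> S #>\<^bsub>R\<^esub> d"
proof
  fix x assume "x \<in> S #>\<^bsub>R\<^esub> c"
  then obtain s where s: "s \<in> S" "x = s \<otimes>\<^bsub>R\<^esub> c" unfolding r_coset_def by auto
  obtain t where t: "t \<in> S" "c = t \<otimes>\<^bsub>R\<^esub> d" using assms unfolding r_coset_def by auto
  have "x = (s \<otimes>\<^bsub>R\<^esub> t) \<otimes>\<^bsub>R\<^esub> d" using s t assoc by simp
  thus "x \<in> S #>\<^bsub>R\<^esub> d" using Smul[OF s(1) t(1)] unfolding r_coset_def by auto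
qed

lemma coset_eqI: "c \<in> S #>\<^bsub>R\<^esub> d \<Longrightarrow> d \<in> S #>\<^bsub>R\<^esub> c \<Longrightarrow> S #>\<^bsub>R\<^esub> c = S #>\<^bsub>R\<^esub> d"
  using coset_sub by blast

lemma coset_eqD: "S #>\<^bsub>R\<^esub> c = S #>\<^bsub>R\<^esub> d \<Longrightarrow> c \<in> S #>\<^bsub>R\<^esub> d"
  using coset_mem by blast

lemma coset_mult: "(S #>\<^bsub>R\<^esub> c) <#>\<^bsub>R\<^esub> (S #>\<^bsub>R\<^esub> d) = S #>\<^bsub>R\<^esub> (c \<otimes>\<^bsub>R\<^esub> d)"
proof (intro equalityI subsetI)
  fix x assume "x \<in> (S #>\<^bsub>R\<^esub> c) <#>\<^bsub>R\<^esub> (S #>\<^bsub>R\<^esub> d)"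
  then obtain s t where st: "s \<in> S" "t \<in> S" "x = (s \<otimes>\<^bsub>R\<^esub> c) \<otimes>\<^bsub>R\<^esub> (t \<otimes>\<^bsub>R\<^esub> d)"
    unfolding r_coset_def set_mult_def by auto
  have "x = (s \<otimes>\<^bsub>R\<^esub> t) \<otimes>\<^bsub>R\<^esub> (c \<otimes>\<^bsub>R\<^esub> d)"
    using st(3) assoc comm by metis
  thus "x \<in> S #>\<^bsub>R\<^esub> (c \<otimes>\<^bsub>R\<^esub> d)" using Smul[OF st(1,2)] unfolding r_coset_def by auto
next
  fix x assume "x \<in> S #>\<^bsub>R\<^esub> (c \<otimes>\<^bsub>R\<^esub> d)"
  then obtain s where s: "s \<in> S" "x = s \<otimes>\<^bsub>R\<^esub> (c \<otimes>\<^bsub>R\<^esub> d)" unfolding r_coset_def by auto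
  have "x = (s \<otimes>\<^bsub>R\<^esub> c) \<otimes>\<^bsub>R\<^esub> (\<one>\<^bsub>R\<^esub> \<otimes>\<^bsub>R\<^esub> d)" using s assoc unit by simp
  thus "x \<in> (S #>\<^bsub>R\<^esub> c) <#>\<^bsub>R\<^esub> (S #>\<^bsub>R\<^esub> d)"
    using s(1) S1 unfolding r_coset_def set_mult_def by blast
qed

end

lemma dG_mult: "dG G (\<lambda>gs. f gs * h gs) gs = dG G f gs * dG G h gs"
  by (simp add: dG_def Let_def power_int_mult_distrib prod.distrib mult_ac)

lemma dG_inverse: "dG G (\<lambda>gs. inverse (f gs)) gs = inverse (dG G f gs)"
  using prod_inversef[of "\<lambda>i. f (merge_at G i gs) powi ((-1)^i)"]
  by (simp add: dG_def Let_def power_int_inverse o_def)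

lemma dG_one: "dG G (\<lambda>gs. 1) gs = 1"
  by (simp add: dG_def Let_def)

lemma dA_mult: "dA G \<sigma> (\<lambda>gs x. f gs x * h gs x) gs x = dA G \<sigma> f gs x * dA G \<sigma> h gs x"
  by (simp add: dA_def Let_def power_int_mult_distrib prod.distrib mult_ac)

lemma dA_lift: "dA G \<sigma> (\<lambda>gs x. c gs) gs x = dG G c gs"
  by (simp add: dA_def dG_def Let_def)

lemma dA_one: "dA G \<sigma> (\<lambda>gs x. 1) gs x = 1"
  by (simp add: dA_def Let_def)

lemma Zg_mult: "f \<in> Zg G n \<Longrightarrow> h \<in> Zg G n \<Longrightarrow> (\<lambda>gs. f gs * h gs) \<in> Zg G n"
  by (simp add: Zg_def dG_mult norm_mult)

lemma Zg_one: "(\<lambda>gs. 1) \<in> Zg G n"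
  by (simp add: Zg_def dG_one)

lemma Bg_one: "(\<lambda>gs. 1) \<in> Bg G n"
  using Zg_one[of G n] by (auto simp: Bg_def intro!: exI[of _ "\<lambda>_. 1"] simp: dG_one)

lemma Bg_mult: assumes "f \<in> Bg G n" "h \<in> Bg G n" shows "(\<lambda>gs. f gs * h gs) \<in> Bg G n"
proof (cases "n = 0")
  case True thus ?thesis using assms Zg_mult[of f G n h] by (auto simp: Bg_def)
next
  case False
  from assms False obtain b1 b2 where
    b: "\<forall>gs\<in>gtuples G (n - 1). cmod (b1 gs) = 1" "\<forall>gs\<in>gtuples G n. f gs = dG G b1 gs"
       "\<forall>gs\<in>gtuples G (n - 1). cmod (b2 gs) = 1" "\<forall>gs\<in>gtuples G n. h gs = dG G b2 gs"
    by (auto simp: Bg_def)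
  show ?thesis using assms Zg_mult[of f G n h] False b
    by (auto simp: Bg_def dG_mult norm_mult intro!: exI[of _ "\<lambda>gs. b1 gs * b2 gs"])
qed

lemma Zg_one_Bg: "c \<in> Zg G n \<Longrightarrow> (\<forall>gs\<in>gtuples G n. c gs = 1) \<Longrightarrow> c \<in> Bg G n"
  by (auto simp: Bg_def dG_one intro!: exI[of _ "\<lambda>_. 1"])

lemma cmul_Zgrp: "cmul (Zgrp G n) (Bg G n)"
  by unfold_locales (auto simp: Zgrp_def mult_ac Bg_one Bg_mult)

lemma meas_cochain_mult:
  "meas_cochain G M n f \<Longrightarrow> meas_cochain G M n h \<Longrightarrow> meas_cochain G M n (\<lambda>gs x. f gs x * h gs x)"
  by (auto simp: meas_cochain_def norm_mult intro!: borel_measurable_times)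

lemma meas_cochain_one: "meas_cochain G M n (\<lambda>gs x. 1)"
  by (auto simp: meas_cochain_def)

lemma Za_mult: "f \<in> Za G M \<sigma> n \<Longrightarrow> h \<in> Za G M \<sigma> n \<Longrightarrow> (\<lambda>gs x. f gs x * h gs x) \<in> Za G M \<sigma> n"
proof -
  assume f: "f \<in> Za G M \<sigma> n" and h: "h \<in> Za G M \<sigma> n"
  show ?thesis unfolding Za_def
  proof (safe intro!: meas_cochain_mult)
    fix gs assume gs: "gs \<in> gtuples G (Suc n)"
    have "AE x in M. dA G \<sigma> f gs x = 1" "AE x in M. dA G \<sigma> h gs x = 1"
      using f h gs by (auto simp: Za_def)
    then show "AE x in M. dA G \<sigma> (\<lambda>gs x. f gs x * h gs x) gs x = 1"
      by eventually_elim (simp add: dA_mult)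
  qed (use f h in \<open>auto simp: Za_def\<close>)
qed




lemma Za_one: "(\<lambda>gs x. 1) \<in> Za G M \<sigma> n"
  by (simp add: Za_def meas_cochain_one dA_one)

lemma Ba_one: "(\<lambda>gs x. 1) \<in> Ba G M \<sigma> n"
  by (auto simp: Ba_def Za_one cohomologous_def meas_cochain_one dA_one intro!: exI[of _ "\<lambda>_ _. 1"])

lemma Ba_mult: assumes a1: "a1 \<in> Ba G M \<sigma> n" and a2: "a2 \<in> Ba G M \<sigma> n"
  shows "(\<lambda>gs x. a1 gs x * a2 gs x) \<in> Ba G M \<sigma> n"
proof -
  have Z: "(\<lambda>gs x. a1 gs x * a2 gs x) \<in> Za G M \<sigma> n" using a1 a2 Za_mult by (auto simp: Ba_def)
  show ?thesis
  proof (cases "n = 0")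
    case True
    have "AE x in M. a1 gs x * a2 gs x = 1" if gs: "gs \<in> gtuples G 0" for gs
    proof -
      have "AE x in M. a1 gs x = 1" "AE x in M. a2 gs x = 1"
        using a1 a2 gs True by (auto simp: Ba_def cohomologous_def)
      thus ?thesis by eventually_elim simp
    qed
    thus ?thesis using Z True by (auto simp: Ba_def cohomologous_def)
  next
    case False
    obtain b1 where b1: "meas_cochain G M (n - 1) b1"
       "\<forall>gs\<in>gtuples G n. AE x in M. a1 gs x * dA G \<sigma> b1 gs x = 1"
      using a1 False by (auto simp: Ba_def cohomologous_def)
    obtain b2 where b2: "meas_cochain G M (n - 1) b2"
       "\<forall>gs\<in>gtuples G n. AE x in M. a2 gs x * dA G \<sigma> b2 gs x = 1"
      using a2 False by (auto simp: Ba_def cohomologous_def)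
    have "AE x in M. a1 gs x * a2 gs x * dA G \<sigma> (\<lambda>gs x. b1 gs x * b2 gs x) gs x = 1"
      if gs: "gs \<in> gtuples G n" for gs
    proof -
      have "AE x in M. a1 gs x * dA G \<sigma> b1 gs x = 1" "AE x in M. a2 gs x * dA G \<sigma> b2 gs x = 1"
        using b1 b2 gs by auto
      thus ?thesis
      proof eventually_elim
        case (elim x)
        have "a1 gs x * a2 gs x * dA G \<sigma> (\<lambda>gs x. b1 gs x * b2 gs x) gs x
            = (a1 gs x * dA G \<sigma> b1 gs x) * (a2 gs x * dA G \<sigma> b2 gs x)"
          by (simp add: dA_mult mult_ac)
        thus ?case using elim by simp
      qed
    qed
    thus ?thesis using Z False b1 b2
      by (auto simp: Ba_def cohomologous_def intro!: exI[of _ "\<lambda>gs x. b1 gs x * b2 gs x"] meas_cochain_mult)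
  qed
qed

lemma cmul_Zagrp: "cmul (Zagrp G M \<sigma> n) (Ba G M \<sigma> n)"
  by unfold_locales (auto simp: Zagrp_def mult_ac Ba_one Ba_mult)

lemma lift_meas: "(\<forall>gs\<in>gtuples G n. cmod (c gs) = 1) \<Longrightarrow> meas_cochain G M n (\<lambda>gs x. c gs)"
  by (auto simp: meas_cochain_def)

lemma lift_Za: "c \<in> Zg G n \<Longrightarrow> (\<lambda>gs x. c gs) \<in> Za G M \<sigma> n"
  by (auto simp: Za_def Zg_def dA_lift lift_meas)

lemma lift_Ba: assumes c: "c \<in> Bg G n" shows "(\<lambda>gs x. c gs) \<in> Ba G M \<sigma> n"
proof (cases "n = 0")
  case True thus ?thesis using c lift_Za[of c G n M \<sigma>] by (auto simp: Bg_def Ba_def cohomologous_def)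
next
  case False
  obtain b where b: "\<forall>gs\<in>gtuples G (n - 1). cmod (b gs) = 1" "\<forall>gs\<in>gtuples G n. c gs = dG G b gs"
    using c False by (auto simp: Bg_def)
  have cz: "c \<in> Zg G n" using c by (simp add: Bg_def)
  have "c gs * dA G \<sigma> (\<lambda>gs x. inverse (b gs)) gs x = 1" if gs: "gs \<in> gtuples G n" for gs x
  proof -
    have "cmod (c gs) = 1" using cz gs by (simp add: Zg_def)
    hence "c gs \<noteq> 0" by auto
    thus ?thesis using b(2) gs by (simp add: dA_lift dG_inverse)
  qed
  moreover have "meas_cochain G M (n - 1) (\<lambda>gs x. inverse (b gs))"
    using b(1) by (intro lift_meas) (simp add: norm_inverse)
  ultimately show ?thesis using False lift_Za[OF cz, of M \<sigma>]
    by (auto simp: Ba_def cohomologous_def intro!: exI[of _ "\<lambda>gs x. inverse (b gs)"])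
qed




lemma Hclass_wd:
  assumes c: "c \<in> Zg G n" and c': "c' \<in> Zg G n" and eq: "Hclass G n c = Hclass G n c'"
  shows "Haclass G M \<sigma> n (\<lambda>gs x. c gs) = Haclass G M \<sigma> n (\<lambda>gs x. c' gs)"
proof -
  interpret A: cmul "Zgrp G n" "Bg G n" by (rule cmul_Zgrp)
  interpret B: cmul "Zagrp G M \<sigma> n" "Ba G M \<sigma> n" by (rule cmul_Zagrp)
  have step: "(\<lambda>gs x. d gs) \<in> Ba G M \<sigma> n #>\<^bsub>Zagrp G M \<sigma> n\<^esub> (\<lambda>gs x. d' gs)"
    if "d \<in> Bg G n #>\<^bsub>Zgrp G n\<^esub> d'" for d d'
  proof -
    from that obtain b where b: "b \<in> Bg G n" "d = (\<lambda>gs. b gs * d' gs)"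
      unfolding r_coset_def by (auto simp: Zgrp_def)
    show ?thesis unfolding r_coset_def
      by (rule UN_I[OF lift_Ba[OF b(1)]]) (simp add: Zagrp_def b(2))
  qed
  have 1: "c \<in> Bg G n #>\<^bsub>Zgrp G n\<^esub> c'" using A.coset_eqD eq unfolding Hclass_def by blast
  have 2: "c' \<in> Bg G n #>\<^bsub>Zgrp G n\<^esub> c" using A.coset_eqD eq unfolding Hclass_def by metis
  show ?thesis unfolding Haclass_def by (rule B.coset_eqI[OF step[OF 1] step[OF 2]])
qed



lemma Hclass_inj:
  assumes core: "\<And>b \<beta>. b \<in> Zg G n \<Longrightarrow> meas_cochain G M (n - 1) \<beta> \<Longrightarrow>
            (\<forall>gs\<in>gtuples G n. AE x in M. b gs * dA G \<sigma> \<beta> gs x = 1) \<Longrightarrow> b \<in> Bg G n"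
    and n: "n \<noteq> 0"
    and c: "c \<in> Zg G n" and c': "c' \<in> Zg G n"
    and eq: "Haclass G M \<sigma> n (\<lambda>gs x. c gs) = Haclass G M \<sigma> n (\<lambda>gs x. c' gs)"
  shows "Hclass G n c = Hclass G n c'"
proof -
  interpret A: cmul "Zgrp G n" "Bg G n" by (rule cmul_Zgrp)
  interpret B: cmul "Zagrp G M \<sigma> n" "Ba G M \<sigma> n" by (rule cmul_Zagrp)
  have step: "d \<in> Bg G n #>\<^bsub>Zgrp G n\<^esub> d'"
    if d: "d \<in> Zg G n" and d': "d' \<in> Zg G n"
      and "(\<lambda>gs x. d gs) \<in> Ba G M \<sigma> n #>\<^bsub>Zagrp G M \<sigma> n\<^esub> (\<lambda>gs x. d' gs)" for d d'
  proof -
    from that(3) obtain a where a: "a \<in> Ba G M \<sigma> n" "(\<lambda>gs x. d gs) = (\<lambda>gs x. a gs x * d' gs)"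
      unfolding r_coset_def by (auto simp: Zagrp_def)
    have dd: "d gs = a gs x * d' gs" for gs x using a(2) by metis
    define b where "b = (\<lambda>gs. d gs * inverse (d' gs))"
    have nz: "d' gs \<noteq> 0" if "gs \<in> gtuples G n" for gs using d' that by (auto simp: Zg_def)
    have bZ: "b \<in> Zg G n" using d d'
      by (auto simp: b_def Zg_def dG_mult dG_inverse norm_mult norm_inverse)
    obtain \<beta> where \<beta>: "meas_cochain G M (n - 1) \<beta>"
        "\<forall>gs\<in>gtuples G n. AE x in M. a gs x * dA G \<sigma> \<beta> gs x = 1"
      using a(1) n by (auto simp: Ba_def cohomologous_def)
    have "\<forall>gs\<in>gtuples G n. AE x in M. b gs * dA G \<sigma> \<beta> gs x = 1"
    proof
      fix gs assume gs: "gs \<in> gtuples G n"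
      have bx: "b gs = a gs x" for x using dd[of gs x] nz[OF gs] by (simp add: b_def field_simps)
      have "AE x in M. a gs x * dA G \<sigma> \<beta> gs x = 1" using \<beta>(2) gs by blast
      thus "AE x in M. b gs * dA G \<sigma> \<beta> gs x = 1" by eventually_elim (metis bx)
    qed
    hence bB: "b \<in> Bg G n" using core[OF bZ \<beta>(1)] by blast
    have "d = (\<lambda>gs. b gs * d' gs)"
    proof
      fix gs show "d gs = b gs * d' gs"
        using dd[of gs undefined] by (cases "d' gs = 0") (auto simp: b_def)
    qed
    thus ?thesis unfolding r_coset_def by (intro UN_I[OF bB]) (simp add: Zgrp_def)
  qed
  have 1: "(\<lambda>gs x. c gs) \<in> Ba G M \<sigma> n #>\<^bsub>Zagrp G M \<sigma> n\<^esub> (\<lambda>gs x. c' gs)"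
    using B.coset_eqD eq unfolding Haclass_def by blast
  have 2: "(\<lambda>gs x. c' gs) \<in> Ba G M \<sigma> n #>\<^bsub>Zagrp G M \<sigma> n\<^esub> (\<lambda>gs x. c gs)"
    using B.coset_eqD eq unfolding Haclass_def by metis
  show ?thesis unfolding Hclass_def by (rule A.coset_eqI[OF step[OF c c' 1] step[OF c' c 2]])
qed



lemma carrier_Hgrp: "carrier (Hgrp G n) = Hclass G n ` Zg G n"
  by (simp add: Hgrp_def carrier_FactGroup Zgrp_def Hclass_def)

lemma carrier_Hact: "carrier (Hact G M \<sigma> n) = Haclass G M \<sigma> n ` Za G M \<sigma> n"
  by (simp add: Hact_def carrier_FactGroup Zagrp_def Haclass_def)

lemma Hclass_mult: "Hclass G n c \<otimes>\<^bsub>Hgrp G n\<^esub> Hclass G n d = Hclass G n (\<lambda>gs. c gs * d gs)"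
proof -
  interpret A: cmul "Zgrp G n" "Bg G n" by (rule cmul_Zgrp)
  show ?thesis using A.coset_mult[of c d] by (simp add: Hgrp_def FactGroup_def Hclass_def Zgrp_def)
qed

lemma Haclass_mult: "Haclass G M \<sigma> n c \<otimes>\<^bsub>Hact G M \<sigma> n\<^esub> Haclass G M \<sigma> n d
    = Haclass G M \<sigma> n (\<lambda>gs x. c gs x * d gs x)"
proof -
  interpret A: cmul "Zagrp G M \<sigma> n" "Ba G M \<sigma> n" by (rule cmul_Zagrp)
  show ?thesis using A.coset_mult[of c d] by (simp add: Hact_def FactGroup_def Haclass_def Zagrp_def)
qed

lemma exists_Psi:
  "\<exists>\<Psi>. \<Psi> \<in> hom (Hgrp G n) (Hact G M \<sigma> n) \<and>
        (\<forall>c\<in>Zg G n. \<Psi> (Hclass G n c) = Haclass G M \<sigma> n (\<lambda>gs x. c gs))"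
proof -
  define \<Psi> where "\<Psi> X = Haclass G M \<sigma> n (\<lambda>gs x. (SOME c. c \<in> Zg G n \<and> X = Hclass G n c) gs)" for X
  have form: "\<Psi> (Hclass G n c) = Haclass G M \<sigma> n (\<lambda>gs x. c gs)" if c: "c \<in> Zg G n" for c
  proof -
    define c0 where "c0 = (SOME c0. c0 \<in> Zg G n \<and> Hclass G n c = Hclass G n c0)"
    have "\<exists>c0. c0 \<in> Zg G n \<and> Hclass G n c = Hclass G n c0" using c by blast
    hence c0: "c0 \<in> Zg G n \<and> Hclass G n c = Hclass G n c0"
      unfolding c0_def by (rule someI_ex)
    have "\<Psi> (Hclass G n c) = Haclass G M \<sigma> n (\<lambda>gs x. c0 gs)"
      unfolding \<Psi>_def c0_def by simp
    also have "\<dots> = Haclass G M \<sigma> n (\<lambda>gs x. c gs)"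
      using Hclass_wd[OF c0[THEN conjunct1] c, OF c0[THEN conjunct2, symmetric]] .
    finally show ?thesis .
  qed
  have "\<Psi> \<in> hom (Hgrp G n) (Hact G M \<sigma> n)"
  proof (rule homI)
    fix X assume "X \<in> carrier (Hgrp G n)"
    then obtain c where c: "c \<in> Zg G n" "X = Hclass G n c" by (auto simp: carrier_Hgrp)
    show "\<Psi> X \<in> carrier (Hact G M \<sigma> n)" using c(2) form[OF c(1)] lift_Za[OF c(1), of M \<sigma>] by (simp add: carrier_Hact)
  next
    fix X Y assume "X \<in> carrier (Hgrp G n)" "Y \<in> carrier (Hgrp G n)"
    then obtain c d where c: "c \<in> Zg G n" "X = Hclass G n c" and d: "d \<in> Zg G n" "Y = Hclass G n d"
      by (auto simp: carrier_Hgrp)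
    show "\<Psi> (X \<otimes>\<^bsub>Hgrp G n\<^esub> Y) = \<Psi> X \<otimes>\<^bsub>Hact G M \<sigma> n\<^esub> \<Psi> Y"
      using c d by (simp add: Hclass_mult Haclass_mult form Zg_mult)
  qed
  thus ?thesis using form by blast
qed




lemma diag_meas: assumes "f \<in> M \<rightarrow>\<^sub>M M" shows "diag_action (\<lambda>_. f) g \<in> (M \<Otimes>\<^sub>M M) \<rightarrow>\<^sub>M (M \<Otimes>\<^sub>M M)"
  using assms unfolding diag_action_def by (simp add: split_beta') measurable

lemma diag_meas': assumes "\<sigma> g \<in> M \<rightarrow>\<^sub>M M" shows "diag_action \<sigma> g \<in> (M \<Otimes>\<^sub>M M) \<rightarrow>\<^sub>M (M \<Otimes>\<^sub>M M)"
  using diag_meas[OF assms, of g] by (simp add: diag_action_def)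

lemma diag_comp:
  assumes "\<And>x. x \<in> space M \<Longrightarrow> \<sigma> gh x = \<sigma> g (\<sigma> h x)" "p \<in> space (M \<Otimes>\<^sub>M M)"
  shows "diag_action \<sigma> gh p = diag_action \<sigma> g (diag_action \<sigma> h p)"
  using assms by (auto simp: diag_action_def space_pair_measure split: prod.splits)

lemma gtuples1: "gtuples G (Suc 0) = (\<lambda>g. [g]) ` carrier G"
  by (auto simp: gtuples_def length_Suc_conv)

lemma gtuples2: "gtuples G 2 = (\<lambda>(g,h). [g,h]) ` (carrier G \<times> carrier G)"
  by (auto simp: gtuples_def length_Suc_conv numeral_2_eq_2 image_iff)

lemma gtuples0: "gtuples G 0 = {[]}"
  by (auto simp: gtuples_def)

lemma dA1: "dA G \<sigma> \<beta> [g] x = \<beta> [] (\<sigma> (inv\<^bsub>G\<^esub> g) x) * inverse (\<beta> [] x)"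
  by (simp add: dA_def)

lemma dA2: "dA G \<sigma> \<beta> [g,h] x = \<beta> [h] (\<sigma> (inv\<^bsub>G\<^esub> g) x) * inverse (\<beta> [g \<otimes>\<^bsub>G\<^esub> h] x) * \<beta> [g] x"
  by (simp add: dA_def merge_at_def)

lemma dG2: "dG G b [g,h] = b [h] * inverse (b [g \<otimes>\<^bsub>G\<^esub> h]) * b [g]"
  by (simp add: dG_def merge_at_def)




lemma pmpD:
  assumes "pmp_action G M \<sigma>"
  shows "prob_space M" "\<And>g. g \<in> carrier G \<Longrightarrow> \<sigma> g \<in> M \<rightarrow>\<^sub>M M"
    "\<And>g. g \<in> carrier G \<Longrightarrow> distr M M (\<sigma> g) = M"
    "\<And>g h x. g \<in> carrier G \<Longrightarrow> h \<in> carrier G \<Longrightarrow> x \<in> space M \<Longrightarrow> \<sigma> (g \<otimes>\<^bsub>G\<^esub> h) x = \<sigma> g (\<sigma> h x)"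
  using assms by (auto simp: pmp_action_def)

lemma core1:
  assumes G: "group G" and cG: "countable (carrier G)" and pmp: "pmp_action G M \<sigma>"
    and wm: "weakly_mixing G M \<sigma>"
    and bZ: "b \<in> Zg G 1" and \<beta>: "meas_cochain G M 0 \<beta>"
    and rel: "\<forall>gs\<in>gtuples G 1. AE x in M. b gs * dA G \<sigma> \<beta> gs x = 1"
  shows "b \<in> Bg G 1"
proof -
  interpret group G by fact
  note pm = pmpD[OF pmp]
  interpret prob_space M by (rule pm(1))
  have sf: "sigma_finite_measure M" by (rule prob_space_imp_sigma_finite[OF pm(1)])
  interpret PP: prob_space "M \<Otimes>\<^sub>M M" by (simp add: prob_space_pair prob_space_axioms)
  define f where "f = \<beta> []"
  have fm[measurable]: "f \<in> borel_measurable M" and f1: "\<And>x. x \<in> space M \<Longrightarrow> cmod (f x) = 1"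
    using \<beta> by (auto simp: f_def meas_cochain_def gtuples0)
  have fnz: "x \<in> space M \<Longrightarrow> f x \<noteq> 0" for x using f1[of x] by auto
  have b1: "cmod (b [g]) = 1" if "g \<in> carrier G" for g
    using bZ that by (auto simp: Zg_def gtuples1)
  have bnz: "g \<in> carrier G \<Longrightarrow> b [g] \<noteq> 0" for g using b1[of g] by auto
  have relg: "AE x in M. b [g] * (f (\<sigma> (inv\<^bsub>G\<^esub> g) x) * inverse (f x)) = 1" if "g \<in> carrier G" for g
    using rel that by (auto simp: gtuples1 dA1 f_def)
  have shift: "AE x in M. f (\<sigma> h x) = f x * inverse (b [inv\<^bsub>G\<^esub> h])" if h: "h \<in> carrier G" for h
    using relg[OF inv_closed[OF h]] AE_space
  proof eventually_elim
    case (elim x)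
    have "b [inv\<^bsub>G\<^esub> h] * (f (\<sigma> h x) * inverse (f x)) = 1" using elim h by simp
    thus ?case using fnz[OF elim(2)] bnz[of "inv\<^bsub>G\<^esub> h"] h by (simp add: field_simps)
  qed
  define F where "F p = f (fst p) * inverse (f (snd p))" for p
  have Fm[measurable]: "F \<in> borel_measurable (M \<Otimes>\<^sub>M M)" unfolding F_def by measurable
  have inv: "AE p in M \<Otimes>\<^sub>M M. F (diag_action \<sigma> h p) = F p" if h: "h \<in> carrier G" for h
    using AE_fst_lift[OF sf sf shift[OF h]] AE_snd_lift[OF sf sf shift[OF h]] AE_space[of "M \<Otimes>\<^sub>M M"]
  proof eventually_elim
    case (elim p)
    have sp: "fst p \<in> space M" "snd p \<in> space M" using elim(3) by (auto simp: space_pair_measure)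
    have "F (diag_action \<sigma> h p) = f (fst p) * inverse (b [inv\<^bsub>G\<^esub> h]) * inverse (f (snd p) * inverse (b [inv\<^bsub>G\<^esub> h]))"
      using elim(1,2) by (simp add: F_def diag_action_def split_beta)
    also have "\<dots> = F p" using fnz[OF sp(1)] fnz[OF sp(2)] bnz[of "inv\<^bsub>G\<^esub> h"] h
      by (simp add: F_def field_simps)
    finally show ?case .
  qed
  have "\<exists>\<kappa>. AE p in M \<Otimes>\<^sub>M M. F p = \<kappa>"
  proof (rule ergodic_invariant_const[OF G cG PP.prob_space_axioms _ _ _ Fm inv])
    show "\<And>g. g \<in> carrier G \<Longrightarrow> diag_action \<sigma> g \<in> M \<Otimes>\<^sub>M M \<rightarrow>\<^sub>M M \<Otimes>\<^sub>M M"
      by (rule diag_meas'[OF pm(2)])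
    show "\<And>g h p. g \<in> carrier G \<Longrightarrow> h \<in> carrier G \<Longrightarrow> p \<in> space (M \<Otimes>\<^sub>M M) \<Longrightarrow>
       diag_action \<sigma> (g \<otimes>\<^bsub>G\<^esub> h) p = diag_action \<sigma> g (diag_action \<sigma> h p)"
      by (rule diag_comp) (rule pm(4); assumption)
    show "ergodic_action G (M \<Otimes>\<^sub>M M) (diag_action \<sigma>)" using wm by (simp add: weakly_mixing_def)
  qed
  then obtain \<kappa> where \<kappa>: "AE p in M \<Otimes>\<^sub>M M. F p = \<kappa>" by blast
  interpret pair_sigma_finite M M by unfold_locales
  have "AE x in M. AE y in M. F (x, y) = \<kappa>" using AE_pair[OF \<kappa>] .
  then obtain x0 where x0: "x0 \<in> space M" "AE y in M. F (x0, y) = \<kappa>"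
    using AE_ex_point[OF prob_space_axioms] by blast
  define a where "a = f x0 * inverse \<kappa>"
  have fa: "AE y in M. f y = a" using x0(2) AE_space
  proof eventually_elim
    case (elim y)
    thus ?case using fnz[OF x0(1)] fnz[OF elim(2)] by (auto simp: F_def a_def field_simps)
  qed
  then obtain y0 where "y0 \<in> space M" "f y0 = a" using AE_ex_point[OF prob_space_axioms] by blast
  hence anz: "a \<noteq> 0" using fnz by blast
  have "\<forall>gs\<in>gtuples G 1. b gs = 1"
  proof
    fix gs assume "gs \<in> gtuples G 1"
    then obtain g where g: "g \<in> carrier G" "gs = [g]" by (auto simp: gtuples1)
    have "AE x in M. f (\<sigma> (inv\<^bsub>G\<^esub> g) x) = a"
      by (rule AE_pmp[OF pm(2) pm(3) fa]) (use g in auto)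
    with relg[OF g(1)] fa have "AE x in M. b [g] = 1"
      by eventually_elim (use anz in \<open>simp add: field_simps\<close>)
    thus "b gs = 1" using g by simp
  qed
  thus ?thesis by (rule Zg_one_Bg[OF bZ])
qed




lemma AE_cross1:
  assumes P: "prob_space M" and ae: "AE p in M \<Otimes>\<^sub>M M. Q p"
  shows "AE P in (M \<Otimes>\<^sub>M M) \<Otimes>\<^sub>M (M \<Otimes>\<^sub>M M). Q (fst (fst P), snd (snd P))"
proof -
  interpret prob_space M by fact
  have sf: "sigma_finite_measure M" by (rule prob_space_imp_sigma_finite[OF P])
  have sf2: "sigma_finite_measure (M \<Otimes>\<^sub>M M)"
    by (rule prob_space_imp_sigma_finite) (simp add: prob_space_pair P)
  interpret pair_sigma_finite M M by unfold_locales
  interpret X: pair_sigma_finite "M \<Otimes>\<^sub>M M" "M \<Otimes>\<^sub>M M" using sf2 by (simp add: pair_sigma_finite_def)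
  from ae obtain N where N: "{x\<in>space (M \<Otimes>\<^sub>M M). \<not>Q x} \<subseteq> N" "emeasure (M \<Otimes>\<^sub>M M) N = 0" "N\<in>sets (M \<Otimes>\<^sub>M M)"
    by (rule AE_E)
  note [measurable] = N(3)
  have "AE p in M \<Otimes>\<^sub>M M. p \<notin> N" using N by (intro AE_not_in) (auto simp: null_sets_def)
  hence "AE x in M. AE t in M. (x, t) \<notin> N" by (rule AE_pair)
  hence "AE p1 in M \<Otimes>\<^sub>M M. AE t in M. (fst p1, t) \<notin> N" by (rule AE_fst_lift[OF sf sf])
  hence "AE p1 in M \<Otimes>\<^sub>M M. AE p2 in M \<Otimes>\<^sub>M M. (fst p1, snd p2) \<notin> N"
    by (rule AE_mp) (rule AE_I2, rule impI, erule AE_snd_lift[OF sf sf])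
  moreover have "{P\<in>space ((M \<Otimes>\<^sub>M M) \<Otimes>\<^sub>M (M \<Otimes>\<^sub>M M)). (fst (fst P), snd (snd P)) \<notin> N} \<in> sets ((M \<Otimes>\<^sub>M M) \<Otimes>\<^sub>M (M \<Otimes>\<^sub>M M))"
    by measurable
  ultimately have "AE P in (M \<Otimes>\<^sub>M M) \<Otimes>\<^sub>M (M \<Otimes>\<^sub>M M). (fst (fst P), snd (snd P)) \<notin> N"
    using X.AE_pair_measure by simp
  then show ?thesis using AE_space[of "(M \<Otimes>\<^sub>M M) \<Otimes>\<^sub>M (M \<Otimes>\<^sub>M M)"]
    by eventually_elim (use N in \<open>auto simp: space_pair_measure\<close>)
qed

lemma AE_cross2:
  assumes P: "prob_space M" and ae: "AE p in M \<Otimes>\<^sub>M M. Q p"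
  shows "AE P in (M \<Otimes>\<^sub>M M) \<Otimes>\<^sub>M (M \<Otimes>\<^sub>M M). Q (fst (snd P), snd (fst P))"
proof -
  interpret prob_space M by fact
  have sf: "sigma_finite_measure M" by (rule prob_space_imp_sigma_finite[OF P])
  have sf2: "sigma_finite_measure (M \<Otimes>\<^sub>M M)"
    by (rule prob_space_imp_sigma_finite) (simp add: prob_space_pair P)
  interpret pair_sigma_finite M M by unfold_locales
  interpret X: pair_sigma_finite "M \<Otimes>\<^sub>M M" "M \<Otimes>\<^sub>M M" using sf2 by (simp add: pair_sigma_finite_def)
  from ae obtain N where N: "{x\<in>space (M \<Otimes>\<^sub>M M). \<not>Q x} \<subseteq> N" "emeasure (M \<Otimes>\<^sub>M M) N = 0" "N\<in>sets (M \<Otimes>\<^sub>M M)"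
    by (rule AE_E)
  note [measurable] = N(3)
  have "AE p in M \<Otimes>\<^sub>M M. p \<notin> N" using N by (intro AE_not_in) (auto simp: null_sets_def)
  hence "AE z in M. AE y in M. (z, y) \<notin> N" by (rule AE_pair)
  hence "AE y in M. AE z in M. (z, y) \<notin> N" by (subst (asm) AE_commute) measurable
  hence "AE p1 in M \<Otimes>\<^sub>M M. AE z in M. (z, snd p1) \<notin> N" by (rule AE_snd_lift[OF sf sf])
  hence "AE p1 in M \<Otimes>\<^sub>M M. AE p2 in M \<Otimes>\<^sub>M M. (fst p2, snd p1) \<notin> N"
    by (rule AE_mp) (rule AE_I2, rule impI, erule AE_fst_lift[OF sf sf])
  moreover have "{P\<in>space ((M \<Otimes>\<^sub>M M) \<Otimes>\<^sub>M (M \<Otimes>\<^sub>M M)). (fst (snd P), snd (fst P)) \<notin> N} \<in> sets ((M \<Otimes>\<^sub>M M) \<Otimes>\<^sub>M (M \<Otimes>\<^sub>M M))"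
    by measurable
  ultimately have "AE P in (M \<Otimes>\<^sub>M M) \<Otimes>\<^sub>M (M \<Otimes>\<^sub>M M). (fst (snd P), snd (fst P)) \<notin> N"
    using X.AE_pair_measure by simp
  then show ?thesis using AE_space[of "(M \<Otimes>\<^sub>M M) \<Otimes>\<^sub>M (M \<Otimes>\<^sub>M M)"]
    by eventually_elim (use N in \<open>auto simp: space_pair_measure\<close>)
qed

lemma AE_sep:
  fixes u :: "'a \<Rightarrow> complex" and v :: "'b \<Rightarrow> complex"
  assumes P1: "prob_space M1" and P2: "prob_space M2"
    and um[measurable]: "u \<in> borel_measurable M1" and vm[measurable]: "v \<in> borel_measurable M2"
    and ae: "AE p in M1 \<Otimes>\<^sub>M M2. u (fst p) = v (snd p)"
  shows "\<exists>y\<in>space M2. AE x in M1. u x = v y"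
proof -
  interpret p1: prob_space M1 by fact
  interpret p2: prob_space M2 by fact
  interpret pair_sigma_finite M1 M2 by unfold_locales
  have "AE x in M1. AE y in M2. u x = v y" using AE_pair[OF ae] by simp
  hence "AE y in M2. AE x in M1. u x = v y" by (subst (asm) AE_commute) measurable
  thus ?thesis using AE_ex_point[OF P2] by blast
qed




lemma core2:
  fixes G :: "('g, 'b) monoid_scheme" and M :: "'x measure" and \<sigma> :: "'g \<Rightarrow> 'x \<Rightarrow> 'x"
  assumes G: "group G" and cG: "countable (carrier G)" and pmp: "pmp_action G M \<sigma>"
    and wm: "weakly_mixing G (M \<Otimes>\<^sub>M M) (diag_action \<sigma>)"
    and sr: "T_cocycle_superrigid G (M \<Otimes>\<^sub>M M) (diag_action \<sigma>)"
    and bZ: "b \<in> Zg G 2" and \<beta>: "meas_cochain G M 1 \<beta>"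
    and rel: "\<forall>gs\<in>gtuples G 2. AE x in M. b gs * dA G \<sigma> \<beta> gs x = 1"
  shows "b \<in> Bg G 2"
proof -
  interpret group G by fact
  note pm = pmpD[OF pmp]
  interpret prob_space M by (rule pm(1))
  have sf: "sigma_finite_measure M" by (rule prob_space_imp_sigma_finite[OF pm(1)])
  have P2: "prob_space (M \<Otimes>\<^sub>M M)" by (simp add: prob_space_pair prob_space_axioms)
  have sf2: "sigma_finite_measure (M \<Otimes>\<^sub>M M)" by (rule prob_space_imp_sigma_finite[OF P2])
  have P4: "prob_space ((M \<Otimes>\<^sub>M M) \<Otimes>\<^sub>M (M \<Otimes>\<^sub>M M))" by (simp add: prob_space_pair P2)
  have sr': "pmp_action G (M \<Otimes>\<^sub>M M) (diag_action \<sigma>)" using sr by (simp add: T_cocycle_superrigid_def)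
  note pm2 = pmpD[OF sr']
  have spM: "\<sigma> g x \<in> space M" if "g \<in> carrier G" "x \<in> space M" for g x
    using measurable_space[OF pm(2)[OF that(1)] that(2)] .
  have spM2: "diag_action \<sigma> g p \<in> space (M \<Otimes>\<^sub>M M)" if "g \<in> carrier G" "p \<in> space (M \<Otimes>\<^sub>M M)" for g p
    using measurable_space[OF pm2(2)[OF that(1)] that(2)] .
  define B where "B g = \<beta> [g]" for g
  have Bm[measurable]: "B g \<in> borel_measurable M" if "g \<in> carrier G" for g
    using \<beta> that by (auto simp: B_def meas_cochain_def gtuples1 fun_eq_iff)
  have B1: "cmod (B g x) = 1" if "g \<in> carrier G" "x \<in> space M" for g x
    using \<beta> that by (auto simp: B_def meas_cochain_def gtuples1)
  have Bnz: "B g x \<noteq> 0" if "g \<in> carrier G" "x \<in> space M" for g x using B1[OF that] by auto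
  have e1: "cmod (b [g, h]) = 1" if "g \<in> carrier G" "h \<in> carrier G" for g h
    using bZ that by (auto simp: Zg_def gtuples2)
  have cocyc: "AE x in M. B (g \<otimes>\<^bsub>G\<^esub> h) x = b [g, h] * B h (\<sigma> (inv\<^bsub>G\<^esub> g) x) * B g x"
    if g: "g \<in> carrier G" and h: "h \<in> carrier G" for g h
  proof -
    have "[g, h] \<in> gtuples G 2" using g h by (auto simp: gtuples2)
    hence "AE x in M. b [g, h] * dA G \<sigma> \<beta> [g, h] x = 1" using rel by blast
    thus ?thesis using AE_space
    proof eventually_elim
      case (elim x)
      have "B (g \<otimes>\<^bsub>G\<^esub> h) x \<noteq> 0" using Bnz[of "g \<otimes>\<^bsub>G\<^esub> h" x] g h elim by auto
      thus ?case using elim(1) by (simp add: dA2 B_def field_simps)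
    qed
  qed
  define w where "w g p = B g (fst p) * inverse (B g (snd p))" for g p
  have wmeas: "w g \<in> borel_measurable (M \<Otimes>\<^sub>M M)" if "g \<in> carrier G" for g
    using Bm[OF that] unfolding w_def by measurable
  have w1: "cmod (w g p) = 1" if "g \<in> carrier G" "p \<in> space (M \<Otimes>\<^sub>M M)" for g p
    using that B1 by (auto simp: w_def space_pair_measure norm_mult norm_inverse)
  have wcoc: "AE p in M \<Otimes>\<^sub>M M. w (g \<otimes>\<^bsub>G\<^esub> h) p = w g p * w h (diag_action \<sigma> (inv\<^bsub>G\<^esub> g) p)"
    if g: "g \<in> carrier G" and h: "h \<in> carrier G" for g h
    using AE_fst_lift[OF sf sf cocyc[OF g h]] AE_snd_lift[OF sf sf cocyc[OF g h]] AE_space[of "M \<Otimes>\<^sub>M M"]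
  proof eventually_elim
    case (elim p)
    have sp: "fst p \<in> space M" "snd p \<in> space M" using elim(3) by (auto simp: space_pair_measure)
    have nz: "B h (\<sigma> (inv\<^bsub>G\<^esub> g) (fst p)) \<noteq> 0" "B h (\<sigma> (inv\<^bsub>G\<^esub> g) (snd p)) \<noteq> 0"
      "B g (fst p) \<noteq> 0" "B g (snd p) \<noteq> 0" "b [g, h] \<noteq> 0"
      using Bnz spM sp g h e1[OF g h] by auto
    show ?case using elim(1,2) nz
      by (simp add: w_def diag_action_def split_beta field_simps)
  qed
  have "\<exists>(chr::'g \<Rightarrow> complex) Fk. (\<forall>g\<in>carrier G. cmod (chr g) = 1) \<and>
        (\<forall>g\<in>carrier G. \<forall>h\<in>carrier G. chr (g \<otimes>\<^bsub>G\<^esub> h) = chr g * chr h) \<and>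
        Fk \<in> borel_measurable (M \<Otimes>\<^sub>M M) \<and> (\<forall>y\<in>space (M \<Otimes>\<^sub>M M). cmod (Fk y) = 1) \<and>
        (\<forall>g\<in>carrier G. AE y in M \<Otimes>\<^sub>M M. w g y = chr g * Fk y / Fk (diag_action \<sigma> (inv\<^bsub>G\<^esub> g) y))"
  proof -
    have H: "\<forall>c :: 'g \<Rightarrow> 'x \<times> 'x \<Rightarrow> complex.
        (\<forall>g\<in>carrier G. c g \<in> borel_measurable (M \<Otimes>\<^sub>M M) \<and> (\<forall>y\<in>space (M \<Otimes>\<^sub>M M). cmod (c g y) = 1)) \<and>
        (\<forall>g\<in>carrier G. \<forall>h\<in>carrier G. AE y in M \<Otimes>\<^sub>M M.
            c (g \<otimes>\<^bsub>G\<^esub> h) y = c g y * c h (diag_action \<sigma> (inv\<^bsub>G\<^esub> g) y))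
        \<longrightarrow> (\<exists>(hom_chr::'g \<Rightarrow> complex) (b::'x \<times> 'x \<Rightarrow> complex).
              (\<forall>g\<in>carrier G. cmod (hom_chr g) = 1) \<and>
              (\<forall>g\<in>carrier G. \<forall>h\<in>carrier G. hom_chr (g \<otimes>\<^bsub>G\<^esub> h) = hom_chr g * hom_chr h) \<and>
              b \<in> borel_measurable (M \<Otimes>\<^sub>M M) \<and> (\<forall>y\<in>space (M \<Otimes>\<^sub>M M). cmod (b y) = 1) \<and>
              (\<forall>g\<in>carrier G. AE y in M \<Otimes>\<^sub>M M. c g y = hom_chr g * b y / b (diag_action \<sigma> (inv\<^bsub>G\<^esub> g) y)))"
      using sr unfolding T_cocycle_superrigid_def by blast
    show ?thesis using H[rule_format, of w] wmeas w1 wcoc by blast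
  qed
  then obtain chr :: "'g \<Rightarrow> complex" and Fk where chr1: "\<And>g. g\<in>carrier G \<Longrightarrow> cmod (chr g) = 1"
    and Fkm[measurable]: "Fk \<in> borel_measurable (M \<Otimes>\<^sub>M M)"
    and Fk1: "\<And>y. y\<in>space (M \<Otimes>\<^sub>M M) \<Longrightarrow> cmod (Fk y) = 1"
    and Fkrel: "\<And>g. g\<in>carrier G \<Longrightarrow> AE y in M \<Otimes>\<^sub>M M. w g y = chr g * Fk y / Fk (diag_action \<sigma> (inv\<^bsub>G\<^esub> g) y)"
    by blast
  have Fknz: "Fk p \<noteq> 0" if "p \<in> space (M \<Otimes>\<^sub>M M)" for p using Fk1[OF that] by auto
  have FkS: "AE p in M \<Otimes>\<^sub>M M. Fk (diag_action \<sigma> h p) = chr (inv\<^bsub>G\<^esub> h) * Fk p * inverse (w (inv\<^bsub>G\<^esub> h) p)"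
    if h: "h \<in> carrier G" for h
    using Fkrel[OF inv_closed[OF h]] AE_space
  proof eventually_elim
    case (elim p)
    have wnz: "w (inv\<^bsub>G\<^esub> h) p \<noteq> 0" using w1[OF inv_closed[OF h] elim(2)] by auto
    have fnz: "Fk (diag_action \<sigma> h p) \<noteq> 0" using Fknz spM2 h elim(2) by auto
    from elim(1) h have "w (inv\<^bsub>G\<^esub> h) p = chr (inv\<^bsub>G\<^esub> h) * Fk p / Fk (diag_action \<sigma> h p)" by simp
    thus ?case using wnz fnz by (simp add: field_simps)
  qed
  define \<Theta> where "\<Theta> P = Fk (fst P) * Fk (snd P) * inverse (Fk (fst (fst P), snd (snd P))) * inverse (Fk (fst (snd P), snd (fst P)))"
    for P :: "('x \<times> 'x) \<times> ('x \<times> 'x)"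
  have \<Theta>m[measurable]: "\<Theta> \<in> borel_measurable ((M \<Otimes>\<^sub>M M) \<Otimes>\<^sub>M (M \<Otimes>\<^sub>M M))" unfolding \<Theta>_def by measurable
  have \<Theta>inv: "AE P in ((M \<Otimes>\<^sub>M M) \<Otimes>\<^sub>M (M \<Otimes>\<^sub>M M)). \<Theta> (diag_action (diag_action \<sigma>) h P) = \<Theta> P" if h: "h \<in> carrier G" for h
    using AE_fst_lift[OF sf2 sf2 FkS[OF h]] AE_snd_lift[OF sf2 sf2 FkS[OF h]]
      AE_cross1[OF pm(1) FkS[OF h]] AE_cross2[OF pm(1) FkS[OF h]] AE_space[of "((M \<Otimes>\<^sub>M M) \<Otimes>\<^sub>M (M \<Otimes>\<^sub>M M))"]
  proof eventually_elim
    case (elim P)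
    obtain x y z t where P: "P = ((x,y),(z,t))" by (metis prod.collapse)
    have sp: "x \<in> space M" "y \<in> space M" "z \<in> space M" "t \<in> space M"
      using elim(5) by (auto simp: P space_pair_measure)
    have hi: "inv\<^bsub>G\<^esub> h \<in> carrier G" using h by simp
    have nz: "chr (inv\<^bsub>G\<^esub> h) \<noteq> 0" "Fk (x,y) \<noteq> 0" "Fk (z,t) \<noteq> 0" "Fk (x,t) \<noteq> 0" "Fk (z,y) \<noteq> 0"
      "B (inv\<^bsub>G\<^esub> h) x \<noteq> 0" "B (inv\<^bsub>G\<^esub> h) y \<noteq> 0" "B (inv\<^bsub>G\<^esub> h) z \<noteq> 0" "B (inv\<^bsub>G\<^esub> h) t \<noteq> 0"
      using chr1[OF hi] Fknz Bnz[OF hi] sp by (auto simp: space_pair_measure)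
    have eqs: "Fk (\<sigma> h x, \<sigma> h y) = chr (inv\<^bsub>G\<^esub> h) * Fk (x,y) * inverse (w (inv\<^bsub>G\<^esub> h) (x,y))"
      "Fk (\<sigma> h z, \<sigma> h t) = chr (inv\<^bsub>G\<^esub> h) * Fk (z,t) * inverse (w (inv\<^bsub>G\<^esub> h) (z,t))"
      "Fk (\<sigma> h x, \<sigma> h t) = chr (inv\<^bsub>G\<^esub> h) * Fk (x,t) * inverse (w (inv\<^bsub>G\<^esub> h) (x,t))"
      "Fk (\<sigma> h z, \<sigma> h y) = chr (inv\<^bsub>G\<^esub> h) * Fk (z,y) * inverse (w (inv\<^bsub>G\<^esub> h) (z,y))"
      using elim(1-4) by (simp_all add: P diag_action_def)
    have "\<Theta> (diag_action (diag_action \<sigma>) h P) = 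
       (chr (inv\<^bsub>G\<^esub> h) * Fk (x,y) * inverse (w (inv\<^bsub>G\<^esub> h) (x,y))) *
       (chr (inv\<^bsub>G\<^esub> h) * Fk (z,t) * inverse (w (inv\<^bsub>G\<^esub> h) (z,t))) *
       inverse (chr (inv\<^bsub>G\<^esub> h) * Fk (x,t) * inverse (w (inv\<^bsub>G\<^esub> h) (x,t))) *
       inverse (chr (inv\<^bsub>G\<^esub> h) * Fk (z,y) * inverse (w (inv\<^bsub>G\<^esub> h) (z,y)))"
      by (simp add: \<Theta>_def P diag_action_def eqs)
    also have "\<dots> = \<Theta> P" using nz by (simp add: \<Theta>_def P w_def field_simps)
    finally show ?case .
  qed
  have "\<exists>\<kappa>. AE P in ((M \<Otimes>\<^sub>M M) \<Otimes>\<^sub>M (M \<Otimes>\<^sub>M M)). \<Theta> P = \<kappa>"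
  proof (rule ergodic_invariant_const[OF G cG P4 _ _ _ \<Theta>m \<Theta>inv])
    show "\<And>g. g \<in> carrier G \<Longrightarrow> diag_action (diag_action \<sigma>) g \<in> ((M \<Otimes>\<^sub>M M) \<Otimes>\<^sub>M (M \<Otimes>\<^sub>M M)) \<rightarrow>\<^sub>M ((M \<Otimes>\<^sub>M M) \<Otimes>\<^sub>M (M \<Otimes>\<^sub>M M))"
      by (rule diag_meas'[OF pm2(2)])
    show "\<And>g h p. g \<in> carrier G \<Longrightarrow> h \<in> carrier G \<Longrightarrow> p \<in> space ((M \<Otimes>\<^sub>M M) \<Otimes>\<^sub>M (M \<Otimes>\<^sub>M M)) \<Longrightarrow>
       diag_action (diag_action \<sigma>) (g \<otimes>\<^bsub>G\<^esub> h) p = diag_action (diag_action \<sigma>) g (diag_action (diag_action \<sigma>) h p)"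
      by (rule diag_comp) (rule pm2(4); assumption)
    show "ergodic_action G ((M \<Otimes>\<^sub>M M) \<Otimes>\<^sub>M (M \<Otimes>\<^sub>M M)) (diag_action (diag_action \<sigma>))" using wm by (simp add: weakly_mixing_def)
  qed
  then obtain \<kappa> where \<kappa>: "AE P in ((M \<Otimes>\<^sub>M M) \<Otimes>\<^sub>M (M \<Otimes>\<^sub>M M)). \<Theta> P = \<kappa>" by blast
  have \<Theta>nz: "\<Theta> P \<noteq> 0" if "P \<in> space ((M \<Otimes>\<^sub>M M) \<Otimes>\<^sub>M (M \<Otimes>\<^sub>M M))" for P
    using that Fknz by (auto simp: \<Theta>_def space_pair_measure)
  obtain P0 where "P0 \<in> space ((M \<Otimes>\<^sub>M M) \<Otimes>\<^sub>M (M \<Otimes>\<^sub>M M))" "\<Theta> P0 = \<kappa>"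
    using AE_ex_point[OF P4 \<kappa>] by blast
  hence \<kappa>nz: "\<kappa> \<noteq> 0" using \<Theta>nz by blast
  interpret X: pair_sigma_finite "M \<Otimes>\<^sub>M M" "M \<Otimes>\<^sub>M M" using sf2 by (simp add: pair_sigma_finite_def)
  have "AE p in M \<Otimes>\<^sub>M M. AE q in M \<Otimes>\<^sub>M M. \<Theta> (p, q) = \<kappa>" using X.AE_pair[OF \<kappa>] .
  hence "AE q in M \<Otimes>\<^sub>M M. AE p in M \<Otimes>\<^sub>M M. \<Theta> (p, q) = \<kappa>" by (subst (asm) X.AE_commute) measurable
  then obtain q0 where q0: "q0 \<in> space (M \<Otimes>\<^sub>M M)" "AE p in M \<Otimes>\<^sub>M M. \<Theta> (p, q0) = \<kappa>"
    using AE_ex_point[OF P2] by blast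
  define z0 where "z0 = fst q0"
  define t0 where "t0 = snd q0"
  have z0t0: "z0 \<in> space M" "t0 \<in> space M" using q0(1) by (auto simp: z0_def t0_def space_pair_measure)
  define k1 where "k1 x = \<kappa> * Fk (x, t0) * inverse (Fk q0)" for x
  define k2 where "k2 y = Fk (z0, y)" for y
  have k1m[measurable]: "k1 \<in> borel_measurable M" unfolding k1_def using z0t0 by measurable
  have k2m[measurable]: "k2 \<in> borel_measurable M" unfolding k2_def using z0t0 by measurable
  have k1nz: "k1 x \<noteq> 0" if "x \<in> space M" for x
    using that z0t0 Fknz q0(1) \<kappa>nz by (auto simp: k1_def space_pair_measure)
  have k2nz: "k2 y \<noteq> 0" if "y \<in> space M" for y
    using that z0t0 Fknz by (auto simp: k2_def space_pair_measure)
  have k2_1: "cmod (k2 y) = 1" if "y \<in> space M" for y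
    using that z0t0 Fk1 by (auto simp: k2_def space_pair_measure)
  have FkF: "AE p in M \<Otimes>\<^sub>M M. Fk p = k1 (fst p) * k2 (snd p)"
    using q0(2) AE_space[of "M \<Otimes>\<^sub>M M"]
  proof eventually_elim
    case (elim p)
    have nz: "Fk q0 \<noteq> 0" "Fk (fst p, t0) \<noteq> 0" "Fk (z0, snd p) \<noteq> 0"
      using Fknz q0(1) elim(2) z0t0 by (auto simp: space_pair_measure)
    from elim(1) have "Fk p * Fk q0 * inverse (Fk (fst p, t0)) * inverse (Fk (z0, snd p)) = \<kappa>"
      by (simp add: \<Theta>_def z0_def t0_def)
    thus ?case using nz by (simp add: k1_def k2_def field_simps)
  qed
  have "\<exists>m. cmod m = 1 \<and> (AE x in M. B g x = m * k1 x * inverse (k1 (\<sigma> (inv\<^bsub>G\<^esub> g) x)))"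
    if g: "g \<in> carrier G" for g
  proof -
    have gi: "inv\<^bsub>G\<^esub> g \<in> carrier G" using g by simp
    note [measurable] = pm(2)[OF gi]
    have s2: "AE p in M \<Otimes>\<^sub>M M. Fk (diag_action \<sigma> (inv\<^bsub>G\<^esub> g) p) =
        k1 (\<sigma> (inv\<^bsub>G\<^esub> g) (fst p)) * k2 (\<sigma> (inv\<^bsub>G\<^esub> g) (snd p))"
      using AE_pmp[OF pm2(2)[OF gi] pm2(3)[OF gi] FkF] by (simp add: diag_action_def split_beta)
    define u where "u x = B g x * k1 (\<sigma> (inv\<^bsub>G\<^esub> g) x) * inverse (k1 x)" for x
    define v where "v y = chr g * k2 y * inverse (k2 (\<sigma> (inv\<^bsub>G\<^esub> g) y)) * B g y" for y
    have um: "u \<in> borel_measurable M" unfolding u_def using Bm[OF g] by measurable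
    have vm: "v \<in> borel_measurable M" unfolding v_def using Bm[OF g] by measurable
    have "AE p in M \<Otimes>\<^sub>M M. u (fst p) = v (snd p)"
      using Fkrel[OF g] s2 FkF AE_space[of "M \<Otimes>\<^sub>M M"]
    proof eventually_elim
      case (elim p)
      obtain x y where p: "p = (x, y)" by (cases p)
      have sp: "x \<in> space M" "y \<in> space M" using elim(4) by (auto simp: p space_pair_measure)
      have nz: "B g x \<noteq> 0" "B g y \<noteq> 0" "k1 x \<noteq> 0" "k2 y \<noteq> 0"
        "k1 (\<sigma> (inv\<^bsub>G\<^esub> g) x) \<noteq> 0" "k2 (\<sigma> (inv\<^bsub>G\<^esub> g) y) \<noteq> 0"
        using Bnz[OF g] k1nz k2nz spM[OF gi] sp by auto
      have "B g x * inverse (B g y) = chr g * (k1 x * k2 y) / (k1 (\<sigma> (inv\<^bsub>G\<^esub> g) x) * k2 (\<sigma> (inv\<^bsub>G\<^esub> g) y))"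
        using elim(1-3) by (simp add: p w_def diag_action_def)
      thus ?case using nz by (simp add: p u_def v_def field_simps)
    qed
    then obtain y0 where y0: "y0 \<in> space M" "AE x in M. u x = v y0"
      using AE_sep[OF pm(1) pm(1) um vm] by blast
    have "cmod (v y0) = 1"
      using y0(1) chr1[OF g] k2_1 B1[OF g] spM[OF gi] by (simp add: v_def norm_mult norm_inverse)
    moreover have "AE x in M. B g x = v y0 * k1 x * inverse (k1 (\<sigma> (inv\<^bsub>G\<^esub> g) x))"
      using y0(2) AE_space
    proof eventually_elim
      case (elim x)
      thus ?case using k1nz[OF elim(2)] k1nz[OF spM[OF gi elim(2)]] by (auto simp: u_def field_simps)
    qed
    ultimately show ?thesis by blast
  qed
  then obtain \<mu> where \<mu>1: "\<And>g. g \<in> carrier G \<Longrightarrow> cmod (\<mu> g) = 1"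
    and \<mu>: "\<And>g. g \<in> carrier G \<Longrightarrow> AE x in M. B g x = \<mu> g * k1 x * inverse (k1 (\<sigma> (inv\<^bsub>G\<^esub> g) x))"
    by metis
  have \<mu>nz: "\<mu> g \<noteq> 0" if "g \<in> carrier G" for g using \<mu>1[OF that] by auto
  have main: "b [g1, g2] = inverse (\<mu> g2) * \<mu> (g1 \<otimes>\<^bsub>G\<^esub> g2) * inverse (\<mu> g1)"
    if g1: "g1 \<in> carrier G" and g2: "g2 \<in> carrier G" for g1 g2
  proof -
    have g1i: "inv\<^bsub>G\<^esub> g1 \<in> carrier G" using g1 by simp
    have g12: "g1 \<otimes>\<^bsub>G\<^esub> g2 \<in> carrier G" using g1 g2 by simp
    have A4: "AE x in M. B g2 (\<sigma> (inv\<^bsub>G\<^esub> g1) x) = \<mu> g2 * k1 (\<sigma> (inv\<^bsub>G\<^esub> g1) x)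
        * inverse (k1 (\<sigma> (inv\<^bsub>G\<^esub> g2) (\<sigma> (inv\<^bsub>G\<^esub> g1) x)))"
      by (rule AE_pmp[OF pm(2)[OF g1i] pm(3)[OF g1i] \<mu>[OF g2]])
    have "AE x in M. b [g1, g2] = inverse (\<mu> g2) * \<mu> (g1 \<otimes>\<^bsub>G\<^esub> g2) * inverse (\<mu> g1)"
      using cocyc[OF g1 g2] \<mu>[OF g1] \<mu>[OF g12] A4 AE_space
    proof eventually_elim
      case (elim x)
      have s1: "\<sigma> (inv\<^bsub>G\<^esub> g1) x \<in> space M" using spM[OF g1i elim(5)] .
      have comp: "\<sigma> (inv\<^bsub>G\<^esub> g2) (\<sigma> (inv\<^bsub>G\<^esub> g1) x) = \<sigma> (inv\<^bsub>G\<^esub> (g1 \<otimes>\<^bsub>G\<^esub> g2)) x"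
        using pm(4)[of "inv\<^bsub>G\<^esub> g2" "inv\<^bsub>G\<^esub> g1" x] g1 g2 elim(5) by (simp add: inv_mult_group)
      have s2: "\<sigma> (inv\<^bsub>G\<^esub> (g1 \<otimes>\<^bsub>G\<^esub> g2)) x \<in> space M" using spM[OF _ elim(5)] g12 by simp
      have nz: "k1 x \<noteq> 0" "k1 (\<sigma> (inv\<^bsub>G\<^esub> g1) x) \<noteq> 0" "k1 (\<sigma> (inv\<^bsub>G\<^esub> (g1 \<otimes>\<^bsub>G\<^esub> g2)) x) \<noteq> 0"
        "\<mu> g1 \<noteq> 0" "\<mu> g2 \<noteq> 0" "\<mu> (g1 \<otimes>\<^bsub>G\<^esub> g2) \<noteq> 0"
        using k1nz elim(5) s1 s2 \<mu>nz g1 g2 g12 by auto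
      have "\<mu> (g1 \<otimes>\<^bsub>G\<^esub> g2) * k1 x * inverse (k1 (\<sigma> (inv\<^bsub>G\<^esub> (g1 \<otimes>\<^bsub>G\<^esub> g2)) x)) =
          b [g1, g2] * (\<mu> g2 * k1 (\<sigma> (inv\<^bsub>G\<^esub> g1) x) * inverse (k1 (\<sigma> (inv\<^bsub>G\<^esub> (g1 \<otimes>\<^bsub>G\<^esub> g2)) x)))
           * (\<mu> g1 * k1 x * inverse (k1 (\<sigma> (inv\<^bsub>G\<^esub> g1) x)))"
        using elim(1-4) comp by simp
      thus ?case using nz by (simp add: field_simps)
    qed
    thus ?thesis using AE_ex_point[OF pm(1)] by blast
  qed
  show ?thesis unfolding Bg_def
  proof (simp add: bZ, intro exI[of _ "\<lambda>gs. inverse (\<mu> (hd gs))"] conjI ballI)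
    fix gs assume "gs \<in> gtuples G (Suc 0)"
    then obtain g where "g \<in> carrier G" "gs = [g]" by (auto simp: gtuples1)
    thus "cmod (inverse (\<mu> (hd gs))) = 1" using \<mu>1 by (simp add: norm_inverse)
  next
    fix gs assume "gs \<in> gtuples G 2"
    then obtain g1 g2 where "g1 \<in> carrier G" "g2 \<in> carrier G" "gs = [g1, g2]" by (auto simp: gtuples2)
    thus "b gs = dG G (\<lambda>gs. inverse (\<mu> (hd gs))) gs" using main by (simp add: dG2)
  qed
qed



theorem lemma2:
  fixes G :: "('g, 'b) monoid_scheme"
    and M :: "'x::polish_space measure"
    and \<sigma> :: "'g \<Rightarrow> 'x \<Rightarrow> 'x"
  assumes "group G"
    and "countable (carrier G)"
    and "sets M = sets borel"
    and "pmp_action G M \<sigma>"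
  shows "\<forall>n::nat. \<exists>\<Psi>.
           \<Psi> \<in> hom (Hgrp G n) (Hact G M \<sigma> n) \<and>
           (\<forall>c\<in>Zg G n. \<Psi> (Hclass G n c) = Haclass G M \<sigma> n (\<lambda>gs x. c gs)) \<and>
           (n = 1 \<and> weakly_mixing G M \<sigma> \<longrightarrow> inj_on \<Psi> (carrier (Hgrp G n))) \<and>
           (n = 2 \<and> weakly_mixing G (M \<Otimes>\<^sub>M M) (diag_action \<sigma>)
                  \<and> T_cocycle_superrigid G (M \<Otimes>\<^sub>M M) (diag_action \<sigma>)
              \<longrightarrow> inj_on \<Psi> (carrier (Hgrp G n)))"
proof
  fix n :: nat
  obtain \<Psi> where hom: "\<Psi> \<in> hom (Hgrp G n) (Hact G M \<sigma> n)"
    and form: "\<forall>c\<in>Zg G n. \<Psi> (Hclass G n c) = Haclass G M \<sigma> n (\<lambda>gs x. c gs)"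
    using exists_Psi[of G n M \<sigma>] by blast
  have inj: "inj_on \<Psi> (carrier (Hgrp G n))"
    if core: "\<And>b \<beta>. b \<in> Zg G n \<Longrightarrow> meas_cochain G M (n - 1) \<beta> \<Longrightarrow>
            (\<forall>gs\<in>gtuples G n. AE x in M. b gs * dA G \<sigma> \<beta> gs x = 1) \<Longrightarrow> b \<in> Bg G n"
      and n0: "n \<noteq> 0"
  proof (rule inj_onI)
    fix X Y assume "X \<in> carrier (Hgrp G n)" "Y \<in> carrier (Hgrp G n)" and eq: "\<Psi> X = \<Psi> Y"
    then obtain c c' where c: "c \<in> Zg G n" "X = Hclass G n c" and c': "c' \<in> Zg G n" "Y = Hclass G n c'"
      by (auto simp: carrier_Hgrp)
    have "Haclass G M \<sigma> n (\<lambda>gs x. c gs) = Haclass G M \<sigma> n (\<lambda>gs x. c' gs)"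
      using eq form c c' by simp
    thus "X = Y" using Hclass_inj[OF core n0 c(1) c'(1)] c c' by simp
  qed
  have i1: "inj_on \<Psi> (carrier (Hgrp G n))" if "n = 1" "weakly_mixing G M \<sigma>"
  proof (rule inj)
    fix b \<beta> assume "b \<in> Zg G n" "meas_cochain G M (n - 1) \<beta>"
      "\<forall>gs\<in>gtuples G n. AE x in M. b gs * dA G \<sigma> \<beta> gs x = 1"
    thus "b \<in> Bg G n" using core1[OF assms(1,2,4) that(2)] that(1) by simp
  qed (use that in simp)
  have i2: "inj_on \<Psi> (carrier (Hgrp G n))" if "n = 2" "weakly_mixing G (M \<Otimes>\<^sub>M M) (diag_action \<sigma>)"
      "T_cocycle_superrigid G (M \<Otimes>\<^sub>M M) (diag_action \<sigma>)"
  proof (rule inj)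
    fix b \<beta> assume "b \<in> Zg G n" "meas_cochain G M (n - 1) \<beta>"
      "\<forall>gs\<in>gtuples G n. AE x in M. b gs * dA G \<sigma> \<beta> gs x = 1"
    thus "b \<in> Bg G n" using core2[OF assms(1,2,4) that(2,3)] that(1) by simp
  qed (use that in simp)
  show "\<exists>\<Psi>. \<Psi> \<in> hom (Hgrp G n) (Hact G M \<sigma> n) \<and>
           (\<forall>c\<in>Zg G n. \<Psi> (Hclass G n c) = Haclass G M \<sigma> n (\<lambda>gs x. c gs)) \<and>
           (n = 1 \<and> weakly_mixing G M \<sigma> \<longrightarrow> inj_on \<Psi> (carrier (Hgrp G n))) \<and>
           (n = 2 \<and> weakly_mixing G (M \<Otimes>\<^sub>M M) (diag_action \<sigma>)
                  \<and> T_cocycle_superrigid G (M \<Otimes>\<^sub>M M) (diag_action \<sigma>)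
              \<longrightarrow> inj_on \<Psi> (carrier (Hgrp G n)))"
    using hom form i1 i2 by blast
qed

end
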